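(* Let $G$ be a commutative group and $f_1,f_2$ bijections of $G$ such that $G(f_1)$ and $G(f_2)$ are not groups. Then $G(f_1)\cong G(f_2)$ if and only if there is $\psi\in\mathrm{Aut}(G)$ such that $$f_2^{-1}\psi f_1(x)=f_2^{-1}\psi f_1(1)\cdot\psi(x)\quad\text{for all }x\in G,$$ and $f_2^{-1}\psi f_1(1)$ is a square in $G$.
   Context: Construction $G(f)$: for a commutative group $G$ (written multiplicatively) and a bijection $f:G\to G$, let $\overline{G}=\{\overline{x}:x\in G\}$ be a disjoint copy of $G$, and let $G(f)$ be the set $G\cup\overline{G}$ with multiplication $*$ defined for $x,y\in G$ by $x*y=xy$, $x*\overline{y}=\overline{xy}$, $\overline{x}*y=\overline{xy}$, $\overline{x}*\overline{y}=f(xy)$. It is a commutative loop (a set with a binary operation, neutral element $1$, and bijective left and right translations). *)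

theory Defs
  imports "HOL-Algebra.Algebra"
begin

text \<open>The loop G(f): carrier is a disjoint union of G (tagged Inl) and a copy
  of G (tagged Inr x standing for x-bar).\<close>

fun Gf_mult :: "('a, 'b) monoid_scheme \<Rightarrow> ('a \<Rightarrow> 'a) \<Rightarrow> 'a + 'a \<Rightarrow> 'a + 'a \<Rightarrow> 'a + 'a" where
  "Gf_mult G f (Inl x) (Inl y) = Inl (x \<otimes>\<^bsub>G\<^esub> y)"
| "Gf_mult G f (Inl x) (Inr y) = Inr (x \<otimes>\<^bsub>G\<^esub> y)"
| "Gf_mult G f (Inr x) (Inl y) = Inr (x \<otimes>\<^bsub>G\<^esub> y)"
| "Gf_mult G f (Inr x) (Inr y) = Inl (f (x \<otimes>\<^bsub>G\<^esub> y))"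

definition Gf :: "('a, 'b) monoid_scheme \<Rightarrow> ('a \<Rightarrow> 'a) \<Rightarrow> ('a + 'a) monoid" where
  "Gf G f = \<lparr> carrier = Inl ` carrier G \<union> Inr ` carrier G,
             monoid.mult = Gf_mult G f,
             one = Inl \<one>\<^bsub>G\<^esub> \<rparr>"

end

theory Submission imports Defs begin

lemma Gf_simps:
  "carrier (Gf G f) = Inl ` carrier G \<union> Inr ` carrier G"
  "x \<otimes>\<^bsub>Gf G f\<^esub> y = Gf_mult G f x y"
  "\<one>\<^bsub>Gf G f\<^esub> = Inl \<one>\<^bsub>G\<^esub>"
  by (simp_all add: Gf_def)

lemma trans_group:
  fixes G :: "('a,'b) monoid_scheme" (structure)
  assumes G: "comm_group G" and c: "c \<in> carrier G"
    and f: "\<And>t. t \<in> carrier G \<Longrightarrow> f t = c \<otimes>\<^bsub>G\<^esub> t"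
  shows "group (Gf G f)"
proof -
  interpret comm_group G by fact
  show ?thesis
  proof (rule groupI, unfold Gf_simps)
    fix x y assume "x \<in> Inl ` carrier G \<union> Inr ` carrier G" "y \<in> Inl ` carrier G \<union> Inr ` carrier G"
    then show "Gf_mult G f x y \<in> Inl ` carrier G \<union> Inr ` carrier G"
      using c by (auto simp: f)
  next
    show "Inl \<one> \<in> Inl ` carrier G \<union> Inr ` carrier G" by auto
  next
    fix x y z assume "x \<in> Inl ` carrier G \<union> Inr ` carrier G" "y \<in> Inl ` carrier G \<union> Inr ` carrier G"
      "z \<in> Inl ` carrier G \<union> Inr ` carrier G"
    then show "Gf_mult G f (Gf_mult G f x y) z = Gf_mult G f x (Gf_mult G f y z)"
      using c by (auto simp: f m_ac)
  next
    fix x assume "x \<in> Inl ` carrier G \<union> Inr ` carrier G"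
    then show "Gf_mult G f (Inl \<one>) x = x" by auto
  next
    fix x assume "x \<in> Inl ` carrier G \<union> Inr ` carrier G"
    then consider a where "a \<in> carrier G" "x = Inl a" | a where "a \<in> carrier G" "x = Inr a" by blast
    then show "\<exists>y\<in>Inl ` carrier G \<union> Inr ` carrier G. Gf_mult G f y x = Inl \<one>"
    proof cases
      case (1 a)
      note a = 1
      show ?thesis using a by (intro bexI[of _ "Inl (inv a)"]) auto
    next
      case (2 a)
      note a = 2
      have e: "inv c \<otimes> inv a \<otimes> a = inv c" using a c by (simp add: m_assoc)
      have "f (inv c \<otimes> inv a \<otimes> a) = \<one>" unfolding e using c by (simp add: f)
      then show ?thesis using a c by (intro bexI[of _ "Inr (inv c \<otimes> inv a)"]) auto
    qed
  qed
qed

lemma iso_sym_gen: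
  assumes "h \<in> iso G H"
    and cl: "\<And>x y. x \<in> carrier G \<Longrightarrow> y \<in> carrier G \<Longrightarrow> x \<otimes>\<^bsub>G\<^esub> y \<in> carrier G"
  shows "inv_into (carrier G) h \<in> iso H G"
proof -
  have h: "h \<in> hom G H" "bij_betw h (carrier G) (carrier H)"
    using assms by (auto simp add: iso_def bij_betw_inv_into)
  then have HG: "bij_betw (inv_into (carrier G) h) (carrier H) (carrier G)"
    by (simp add: bij_betw_inv_into)
  have "inv_into (carrier G) h \<in> hom H G"
    unfolding hom_def
  proof safe
    show *: "\<And>x. x \<in> carrier H \<Longrightarrow> inv_into (carrier G) h x \<in> carrier G"
      by (meson HG bij_betwE)
    show "inv_into (carrier G) h (x \<otimes>\<^bsub>H\<^esub> y) = inv_into (carrier G) h x \<otimes>\<^bsub>G\<^esub> inv_into (carrier G) h y"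
      if "x \<in> carrier H" "y \<in> carrier H" for x y
    proof (rule inv_into_f_eq)
      show "inj_on h (carrier G)"
        using bij_betw_def h(2) by blast
      have m: "h \<in> carrier G \<rightarrow> carrier H \<and> (\<forall>x\<in>carrier G. \<forall>y\<in>carrier G. h (x \<otimes>\<^bsub>G\<^esub> y) = h x \<otimes>\<^bsub>H\<^esub> h y)"
        using h(1) unfolding hom_def by simp
      show "h (inv_into (carrier G) h x \<otimes>\<^bsub>G\<^esub> inv_into (carrier G) h y) = x \<otimes>\<^bsub>H\<^esub> y"
        using m bij_betw_inv_into_right [OF h(2)] by (simp add: "*" that)
      show "inv_into (carrier G) h x \<otimes>\<^bsub>G\<^esub> inv_into (carrier G) h y \<in> carrier G"
        by (simp add: * that cl)
    qed
  qed
  then show ?thesis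
    by (simp add: Group.iso_def bij_betw_inv_into h)
qed

lemma no_mix:
  fixes G :: "('a,'b) monoid_scheme" (structure)
  assumes G: "comm_group G" and f2c: "\<And>t. t \<in> carrier G \<Longrightarrow> f2 t \<in> carrier G"
    and hom: "\<phi> \<in> hom (Gf G f1) (Gf G f2)"
    and surj: "\<phi> ` carrier (Gf G f1) = carrier (Gf G f2)"
    and ng: "\<not> group (Gf G f2)" and x: "x \<in> carrier G"
  shows "\<exists>y\<in>carrier G. \<phi> (Inl x) = Inl y"
proof (rule ccontr)
  interpret comm_group G by fact
  assume nc: "\<not> (\<exists>y\<in>carrier G. \<phi> (Inl x) = Inl y)"
  have hm: "\<And>u v. u \<in> carrier (Gf G f1) \<Longrightarrow> v \<in> carrier (Gf G f1) \<Longrightarrow>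
      \<phi> (Gf_mult G f1 u v) = Gf_mult G f2 (\<phi> u) (\<phi> v)"
    and hc: "\<And>u. u \<in> carrier (Gf G f1) \<Longrightarrow> \<phi> u \<in> carrier (Gf G f2)"
    using hom by (auto simp: hom_def Gf_simps)
  have xl: "Inl x \<in> carrier (Gf G f1)" using x by (simp add: Gf_simps)
  have "\<phi> (Inl x) \<in> carrier (Gf G f2)" using hc xl by blast
  then obtain b where b: "b \<in> carrier G" "\<phi> (Inl x) = Inr b" using nc by (auto simp: Gf_simps)
  have key: "f2 (b \<otimes> b) \<otimes> k = b \<otimes> f2 (b \<otimes> k)" if k: "k \<in> carrier G" for k
  proof -
    have "Inr k \<in> \<phi> ` carrier (Gf G f1)" using surj k by (simp add: Gf_simps)
    then obtain c where c: "c \<in> carrier (Gf G f1)" "\<phi> c = Inr k" by auto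
    have a1: "Gf_mult G f1 (Gf_mult G f1 (Inl x) (Inl x)) c = Gf_mult G f1 (Inl x) (Gf_mult G f1 (Inl x) c)"
      using c x by (auto simp: Gf_simps m_assoc)
    have xc: "Gf_mult G f1 (Inl x) c \<in> carrier (Gf G f1)" using c x by (auto simp: Gf_simps)
    have xx: "Gf_mult G f1 (Inl x) (Inl x) \<in> carrier (Gf G f1)" using x by (auto simp: Gf_simps)
    have "\<phi> (Gf_mult G f1 (Gf_mult G f1 (Inl x) (Inl x)) c) = Gf_mult G f2 (Gf_mult G f2 (Inr b) (Inr b)) (Inr k)"
      using hm[OF xx c(1)] hm[OF xl xl] b c by simp
    moreover have "\<phi> (Gf_mult G f1 (Inl x) (Gf_mult G f1 (Inl x) c)) = Gf_mult G f2 (Inr b) (Gf_mult G f2 (Inr b) (Inr k))"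
      using hm[OF xl xc] hm[OF xl c(1)] b c by simp
    ultimately show ?thesis using a1 by simp
  qed
  define c where "c = inv b \<otimes> inv b \<otimes> f2 (b \<otimes> b)"
  have cc: "c \<in> carrier G" using b f2c by (simp add: c_def)
  have "f2 t = c \<otimes> t" if t: "t \<in> carrier G" for t
  proof -
    have e: "b \<otimes> (inv b \<otimes> t) = t" using b t by (simp add: m_assoc[symmetric])
    have "f2 (b \<otimes> b) \<otimes> (inv b \<otimes> t) = b \<otimes> f2 t" using key[of "inv b \<otimes> t"] b t e by simp
    then have "inv b \<otimes> (f2 (b \<otimes> b) \<otimes> (inv b \<otimes> t)) = f2 t"
      using b t f2c by (simp add: m_assoc[symmetric])
    then show ?thesis using b t f2c by (simp add: c_def m_ac)
  qed
  then have "group (Gf G f2)" using trans_group[OF G cc] by blast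
  then show False using ng by simp
qed


lemma prop_aux:
  fixes G :: "('a, 'b) monoid_scheme" (structure) and f1 f2 :: "'a \<Rightarrow> 'a"
  assumes "comm_group G"
    and "bij_betw f1 (carrier G) (carrier G)"
    and "bij_betw f2 (carrier G) (carrier G)"
    and "\<not> group (Gf G f1)"
    and "\<not> group (Gf G f2)"
  shows "Gf G f1 \<cong> Gf G f2 \<longleftrightarrow>
    (\<exists>\<psi> \<in> iso G G.
       (\<forall>x \<in> carrier G.
          inv_into (carrier G) f2 (\<psi> (f1 x)) =
            inv_into (carrier G) f2 (\<psi> (f1 \<one>\<^bsub>G\<^esub>)) \<otimes>\<^bsub>G\<^esub> \<psi> x)
     \<and> (\<exists>y \<in> carrier G. inv_into (carrier G) f2 (\<psi> (f1 \<one>\<^bsub>G\<^esub>)) = y \<otimes>\<^bsub>G\<^esub> y))"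
proof -
  interpret comm_group G by fact
  have G: "comm_group G" by fact
  have b1: "bij_betw f1 (carrier G) (carrier G)" using assms(2) .
  have b2: "bij_betw f2 (carrier G) (carrier G)" using assms(3) .
  have f1c: "\<And>t. t \<in> carrier G \<Longrightarrow> f1 t \<in> carrier G" using bij_betwE[OF b1] by blast
  have f2c: "\<And>t. t \<in> carrier G \<Longrightarrow> f2 t \<in> carrier G" using bij_betwE[OF b2] by blast
  have inj2: "inj_on f2 (carrier G)" using b2 unfolding bij_betw_def by blast
  have img2: "f2 ` carrier G = carrier G" using b2 unfolding bij_betw_def by blast
  have cl1: "\<And>u v. u \<in> carrier (Gf G f1) \<Longrightarrow> v \<in> carrier (Gf G f1) \<Longrightarrow> u \<otimes>\<^bsub>Gf G f1\<^esub> v \<in> carrier (Gf G f1)"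
    using f1c by (auto simp: Gf_simps)
  have cl2: "\<And>u v. u \<in> carrier (Gf G f2) \<Longrightarrow> v \<in> carrier (Gf G f2) \<Longrightarrow> u \<otimes>\<^bsub>Gf G f2\<^esub> v \<in> carrier (Gf G f2)"
    using f2c by (auto simp: Gf_simps)
  show ?thesis
  proof
    assume "Gf G f1 \<cong> Gf G f2"
    then obtain \<phi> where phi: "\<phi> \<in> iso (Gf G f1) (Gf G f2)" unfolding is_iso_def by blast
    define \<phi>' where "\<phi>' = inv_into (carrier (Gf G f1)) \<phi>"
    have phi': "\<phi>' \<in> iso (Gf G f2) (Gf G f1)" unfolding \<phi>'_def by (rule iso_sym_gen[OF phi cl1])
    have hm: "\<And>u v. u \<in> carrier (Gf G f1) \<Longrightarrow> v \<in> carrier (Gf G f1) \<Longrightarrow>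
      \<phi> (Gf_mult G f1 u v) = Gf_mult G f2 (\<phi> u) (\<phi> v)"
      and hc: "\<And>u. u \<in> carrier (Gf G f1) \<Longrightarrow> \<phi> u \<in> carrier (Gf G f2)"
      using phi by (auto simp: iso_def hom_def Gf_simps)
    have surj: "\<phi> ` carrier (Gf G f1) = carrier (Gf G f2)" and inj: "inj_on \<phi> (carrier (Gf G f1))"
      using phi by (auto simp: iso_def bij_betw_def)
    have surj': "\<phi>' ` carrier (Gf G f2) = carrier (Gf G f1)"
      using phi' by (auto simp: iso_def bij_betw_def)
    have nm: "\<exists>y\<in>carrier G. \<phi> (Inl x) = Inl y" if "x \<in> carrier G" for x
      using no_mix[OF G f2c _ surj] phi that assms(5) by (auto simp: iso_def)
    have nm': "\<exists>y\<in>carrier G. \<phi>' (Inl x) = Inl y" if "x \<in> carrier G" for x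
      using no_mix[OF G f1c _ surj'] phi' that assms(4) by (auto simp: iso_def)
    define \<psi> where "\<psi> x = projl (\<phi> (Inl x))" for x
    have psi: "\<psi> x \<in> carrier G" "\<phi> (Inl x) = Inl (\<psi> x)" if "x \<in> carrier G" for x
      using nm[OF that] by (auto simp: \<psi>_def)
    have inr1: "Inr \<one> \<in> carrier (Gf G f1)" by (simp add: Gf_simps)
    obtain d where d: "d \<in> carrier G" "\<phi> (Inr \<one>) = Inr d"
    proof -
      have "\<phi> (Inr \<one>) \<in> carrier (Gf G f2)" using hc inr1 by blast
      moreover have "\<phi> (Inr \<one>) \<notin> Inl ` carrier G"
      proof
        assume "\<phi> (Inr \<one>) \<in> Inl ` carrier G"
        then obtain z where z: "z \<in> carrier G" "\<phi> (Inr \<one>) = Inl z" by auto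
        have "\<phi>' (Inl z) = Inr \<one>" unfolding \<phi>'_def using inv_into_f_f[OF inj inr1] z(2)
          by simp
        then show False using nm'[OF z(1)] by auto
      qed
      ultimately show ?thesis using that by (auto simp: Gf_simps)
    qed
    have psi_m: "\<psi> (x \<otimes> y) = \<psi> x \<otimes> \<psi> y" if "x \<in> carrier G" "y \<in> carrier G" for x y
    proof -
      have "\<phi> (Gf_mult G f1 (Inl x) (Inl y)) = Gf_mult G f2 (\<phi> (Inl x)) (\<phi> (Inl y))"
        using hm[of "Inl x" "Inl y"] that by (simp add: Gf_simps)
      then show ?thesis using psi that by simp
    qed
    have psi1: "\<psi> \<one> = \<one>"
    proof -
      have "\<psi> \<one> \<otimes> \<psi> \<one> = \<psi> \<one> \<otimes> \<one>" using psi_m[of \<one> \<one>] psi by simp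
      then show ?thesis using psi by (metis l_cancel one_closed)
    qed
    have psi_iso: "\<psi> \<in> iso G G"
    proof (rule isoI)
      show "\<psi> \<in> hom G G" unfolding hom_def using psi psi_m by auto
      show "bij_betw \<psi> (carrier G) (carrier G)" unfolding bij_betw_def
      proof
        show "inj_on \<psi> (carrier G)"
        proof
          fix x y assume xy: "x \<in> carrier G" "y \<in> carrier G" "\<psi> x = \<psi> y"
          then have "\<phi> (Inl x) = \<phi> (Inl y)" using psi by simp
          moreover have "Inl x \<in> carrier (Gf G f1)" "Inl y \<in> carrier (Gf G f1)" using xy by (auto simp: Gf_simps)
          ultimately have "Inl x = (Inl y :: 'a + 'a)" using inj_onD[OF inj] by blast
          then show "x = y" by simp
        qed
        show "\<psi> ` carrier G = carrier G"
        proof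
          show "\<psi> ` carrier G \<subseteq> carrier G" using psi by auto
          show "carrier G \<subseteq> \<psi> ` carrier G"
          proof
            fix y assume y: "y \<in> carrier G"
            obtain z where z: "z \<in> carrier G" "\<phi>' (Inl y) = Inl z" using nm'[OF y] by auto
            have "Inl y \<in> \<phi> ` carrier (Gf G f1)" using surj y by (simp add: Gf_simps)
            then have "\<phi> (\<phi>' (Inl y)) = Inl y" unfolding \<phi>'_def by (rule f_inv_into_f)
            then have "\<psi> z = y" using z psi by simp
            then show "y \<in> \<psi> ` carrier G" using z by blast
          qed
        qed
      qed
    qed
    have phir: "\<phi> (Inr x) = Inr (\<psi> x \<otimes> d)" if x: "x \<in> carrier G" for x
    proof -
      have "\<phi> (Gf_mult G f1 (Inl x) (Inr \<one>)) = Gf_mult G f2 (\<phi> (Inl x)) (\<phi> (Inr \<one>))"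
        using hm[OF _ inr1, of "Inl x"] x by (simp add: Gf_simps)
      then show ?thesis using x psi d by simp
    qed
    have keyw: "\<psi> (f1 w) = f2 (\<psi> w \<otimes> d \<otimes> d)" if w: "w \<in> carrier G" for w
    proof -
      have "\<phi> (Gf_mult G f1 (Inr w) (Inr \<one>)) = Gf_mult G f2 (\<phi> (Inr w)) (\<phi> (Inr \<one>))"
        using hm[OF _ inr1, of "Inr w"] w by (simp add: Gf_simps)
      then show ?thesis using w psi phir d f1c by simp
    qed
    have invw: "inv_into (carrier G) f2 (\<psi> (f1 w)) = \<psi> w \<otimes> d \<otimes> d" if w: "w \<in> carrier G" for w
      using keyw[OF w] inv_into_f_f[OF inj2] w psi d by simp
    have inv1: "inv_into (carrier G) f2 (\<psi> (f1 \<one>)) = d \<otimes> d"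
      using invw[of \<one>] psi1 d by simp
    show "\<exists>\<psi> \<in> iso G G.
       (\<forall>x \<in> carrier G.
          inv_into (carrier G) f2 (\<psi> (f1 x)) =
            inv_into (carrier G) f2 (\<psi> (f1 \<one>)) \<otimes> \<psi> x)
     \<and> (\<exists>y \<in> carrier G. inv_into (carrier G) f2 (\<psi> (f1 \<one>)) = y \<otimes> y)"
    proof (rule bexI[OF _ psi_iso], intro conjI ballI)
      fix x assume x: "x \<in> carrier G"
      show "inv_into (carrier G) f2 (\<psi> (f1 x)) = inv_into (carrier G) f2 (\<psi> (f1 \<one>)) \<otimes> \<psi> x"
        unfolding inv1 invw[OF x] using x psi d by (simp add: m_ac)
    next
      show "\<exists>y \<in> carrier G. inv_into (carrier G) f2 (\<psi> (f1 \<one>)) = y \<otimes> y"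
        using inv1 d by blast
    qed
  next
    assume "\<exists>\<psi> \<in> iso G G.
       (\<forall>x \<in> carrier G.
          inv_into (carrier G) f2 (\<psi> (f1 x)) =
            inv_into (carrier G) f2 (\<psi> (f1 \<one>)) \<otimes> \<psi> x)
     \<and> (\<exists>y \<in> carrier G. inv_into (carrier G) f2 (\<psi> (f1 \<one>)) = y \<otimes> y)"
    then obtain \<psi> y where psi: "\<psi> \<in> iso G G"
      and cond: "\<And>x. x \<in> carrier G \<Longrightarrow> inv_into (carrier G) f2 (\<psi> (f1 x)) =
            inv_into (carrier G) f2 (\<psi> (f1 \<one>)) \<otimes> \<psi> x"
      and y: "y \<in> carrier G" and hy: "inv_into (carrier G) f2 (\<psi> (f1 \<one>)) = y \<otimes> y"
      by blast
    have psic: "\<And>x. x \<in> carrier G \<Longrightarrow> \<psi> x \<in> carrier G"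
      and psim: "\<And>x z. x \<in> carrier G \<Longrightarrow> z \<in> carrier G \<Longrightarrow> \<psi> (x \<otimes> z) = \<psi> x \<otimes> \<psi> z"
      using psi by (auto simp: iso_def hom_def)
    have psiinj: "inj_on \<psi> (carrier G)" and psiimg: "\<psi> ` carrier G = carrier G"
      using psi by (auto simp: iso_def bij_betw_def)
    have key: "\<psi> (f1 z) = f2 (y \<otimes> y \<otimes> \<psi> z)" if z: "z \<in> carrier G" for z
    proof -
      have "\<psi> (f1 z) \<in> f2 ` carrier G" using img2 psic f1c z by simp
      then have "\<psi> (f1 z) = f2 (inv_into (carrier G) f2 (\<psi> (f1 z)))" by (simp add: f_inv_into_f)
      then show ?thesis using cond[OF z] hy by simp
    qed
    define \<phi> where "\<phi> = case_sum (\<lambda>x. Inl (\<psi> x)) (\<lambda>x. Inr (y \<otimes> \<psi> x))"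
    have "\<phi> \<in> iso (Gf G f1) (Gf G f2)"
    proof (rule isoI)
      show "\<phi> \<in> hom (Gf G f1) (Gf G f2)"
        unfolding hom_def
      proof (intro CollectI conjI ballI)
        show "\<phi> \<in> carrier (Gf G f1) \<rightarrow> carrier (Gf G f2)"
          using psic y by (auto simp: \<phi>_def Gf_simps)
        fix u v assume uv: "u \<in> carrier (Gf G f1)" "v \<in> carrier (Gf G f1)"
        then consider a b where "a \<in> carrier G" "b \<in> carrier G" "u = Inl a" "v = Inl b"
          | a b where "a \<in> carrier G" "b \<in> carrier G" "u = Inl a" "v = Inr b"
          | a b where "a \<in> carrier G" "b \<in> carrier G" "u = Inr a" "v = Inl b"
          | a b where "a \<in> carrier G" "b \<in> carrier G" "u = Inr a" "v = Inr b"
          by (auto simp: Gf_simps)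
        then show "\<phi> (u \<otimes>\<^bsub>Gf G f1\<^esub> v) = \<phi> u \<otimes>\<^bsub>Gf G f2\<^esub> \<phi> v"
        proof cases
          case 1 then show ?thesis using psim by (simp add: \<phi>_def Gf_simps)
        next
          case 2 then show ?thesis using psim psic y by (simp add: \<phi>_def Gf_simps m_ac)
        next
          case 3 then show ?thesis using psim psic y by (simp add: \<phi>_def Gf_simps m_ac)
        next
          case 4
          have "y \<otimes> \<psi> a \<otimes> (y \<otimes> \<psi> b) = y \<otimes> y \<otimes> \<psi> (a \<otimes> b)"
            using 4 psim psic y by (simp add: m_ac)
          then show ?thesis using 4 key[of "a \<otimes> b"] by (simp add: \<phi>_def Gf_simps)
        qed
      qed
      show "bij_betw \<phi> (carrier (Gf G f1)) (carrier (Gf G f2))" unfolding bij_betw_def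
      proof
        show "inj_on \<phi> (carrier (Gf G f1))"
        proof
          fix u v assume uv: "u \<in> carrier (Gf G f1)" "v \<in> carrier (Gf G f1)" "\<phi> u = \<phi> v"
          then consider a b where "a \<in> carrier G" "b \<in> carrier G" "u = Inl a" "v = Inl b" "\<psi> a = \<psi> b"
            | a b where "a \<in> carrier G" "b \<in> carrier G" "u = Inr a" "v = Inr b" "y \<otimes> \<psi> a = y \<otimes> \<psi> b"
            by (auto simp: Gf_simps \<phi>_def)
          then show "u = v"
          proof cases
            case 1 then show ?thesis using psiinj by (auto simp: inj_on_def)
          next
            case 2
            then have "\<psi> a = \<psi> b" using y psic by simp
            then show ?thesis using 2 psiinj by (auto simp: inj_on_def)
          qed
        qed
        show "\<phi> ` carrier (Gf G f1) = carrier (Gf G f2)"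
        proof
          show "\<phi> ` carrier (Gf G f1) \<subseteq> carrier (Gf G f2)"
            using psic y by (auto simp: \<phi>_def Gf_simps)
          show "carrier (Gf G f2) \<subseteq> \<phi> ` carrier (Gf G f1)"
          proof
            fix w assume "w \<in> carrier (Gf G f2)"
            then consider z where "z \<in> carrier G" "w = Inl z" | z where "z \<in> carrier G" "w = Inr z"
              by (auto simp: Gf_simps)
            then show "w \<in> \<phi> ` carrier (Gf G f1)"
            proof cases
              case 1
              then obtain a where a: "a \<in> carrier G" "z = \<psi> a" using psiimg by blast
              then have "\<phi> (Inl a) = w" using 1 by (simp add: \<phi>_def)
              moreover have "Inl a \<in> carrier (Gf G f1)" using a by (simp add: Gf_simps)
              ultimately show ?thesis by blast
            next
              case 2
              have "inv y \<otimes> z \<in> carrier G" using 2 y by simp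
              then obtain a where a: "a \<in> carrier G" "inv y \<otimes> z = \<psi> a" using psiimg by blast
              then have "y \<otimes> \<psi> a = z" using 2 y by (metis inv_closed m_assoc r_inv l_one)
              then have "\<phi> (Inr a) = w" using 2 by (simp add: \<phi>_def)
              moreover have "Inr a \<in> carrier (Gf G f1)" using a by (simp add: Gf_simps)
              ultimately show ?thesis by blast
            qed
          qed
        qed
      qed
    qed
    then show "Gf G f1 \<cong> Gf G f2" by (rule is_isoI)
  qed
qed

theorem proposition2p5:
  fixes G :: "('a, 'b) monoid_scheme" and f1 f2 :: "'a \<Rightarrow> 'a"
  assumes "comm_group G"
    and "bij_betw f1 (carrier G) (carrier G)"
    and "bij_betw f2 (carrier G) (carrier G)"
    and "\<not> group (Gf G f1)"
    and "\<not> group (Gf G f2)"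
  shows "Gf G f1 \<cong> Gf G f2 \<longleftrightarrow>
    (\<exists>\<psi> \<in> iso G G.
       (\<forall>x \<in> carrier G.
          inv_into (carrier G) f2 (\<psi> (f1 x)) =
            inv_into (carrier G) f2 (\<psi> (f1 \<one>\<^bsub>G\<^esub>)) \<otimes>\<^bsub>G\<^esub> \<psi> x)
     \<and> (\<exists>y \<in> carrier G. inv_into (carrier G) f2 (\<psi> (f1 \<one>\<^bsub>G\<^esub>)) = y \<otimes>\<^bsub>G\<^esub> y))"
  using prop_aux[OF assms] .

end
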